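(* Let $\mathcal{D}\subseteq\mathbb{R}^m$ be a polyhedron and $c,d\in\mathbb{R}^m$, and consider the problem $\inf\ c^\top x/d^\top x$ subject to $d^\top x>0$, $x\in\mathcal{D}$. If $\mathcal{D}\cap\{x: d^\top x>0\}\ne\emptyset$, then the optimal value of this problem is $-\infty$ if and only if at least one of the following holds: (1) there exists $x\in\mathcal{D}$ with $c^\top x<0$ and $d^\top x=0$; (2) there exists $r\in\mathbb{R}^m$ with $c^\top r<0$, $d^\top r=0$, and $x+\lambda r\in\mathcal{D}$ for all $x\in\mathcal{D}$ and all $\lambda\ge0$. *)

theory Defs
  imports "HOL-Analysis.Analysis" "HOL-Library.Extended_Real"
begin

end

theory Submission
  imports Defs
begin

lemma ratio_small:
  fixes cy dy k B :: real
  assumes "dy > 0" "k < 0"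
  shows "\<exists>s\<ge>0. (cy + s * k) / dy < B"
proof -
  define s where "s = \<bar>B * dy - cy\<bar> / (- k) + 1"
  have s0: "s \<ge> 0" using assms by (simp add: s_def)
  have "s * k = - \<bar>B * dy - cy\<bar> + k" using assms by (simp add: s_def field_simps)
  then have "cy + s * k < B * dy" using assms by linarith
  then have "(cy + s * k) / dy < B" using assms by (simp add: divide_less_eq)
  then show ?thesis using s0 by blast
qed

lemma farkas_part:
  fixes D :: "(real ^ 'm) set" and c d :: "real ^ 'm"
  assumes "polyhedron D"
    and n1: "\<not> (\<exists>x\<in>D. c \<bullet> x < 0 \<and> d \<bullet> x = 0)"
    and n2: "\<not> (\<exists>r. c \<bullet> r < 0 \<and> d \<bullet> r = 0 \<and> (\<forall>x\<in>D. \<forall>t::real. t \<ge> 0 \<longrightarrow> x + t *\<^sub>R r \<in> D))"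
  shows "\<exists>\<mu>. \<forall>x\<in>D. - (c \<bullet> x) \<le> \<mu> * (d \<bullet> x)"
proof -
  obtain F where F: "finite F" "D = \<Inter>F" "\<forall>h\<in>F. \<exists>a b. a \<noteq> 0 \<and> h = {x. a \<bullet> x \<le> b}"
    using assms(1) unfolding polyhedron_def by blast
  then obtain a b where ab: "\<And>h. h \<in> F \<Longrightarrow> h = {x. a h \<bullet> x \<le> b h}"
    by metis
  have Dmem: "x \<in> D \<longleftrightarrow> (\<forall>h\<in>F. a h \<bullet> x \<le> b h)" for x
    using F(2) ab by auto
  define S :: "((real ^ 'm) \<times> real) set" where
    "S = (\<lambda>h. (a h, b h)) ` F \<union> {(d,0), (-d,0), (0,1)}"
  define K where "K = convex_cone hull S"
  have finS: "finite S" using F(1) by (simp add: S_def)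
  have closedK: "closed K" unfolding K_def using finS by (rule closed_convex_cone_hull)
  have convK: "convex K" unfolding K_def by (rule convex_convex_cone_hull)
  have conK: "conic K" unfolding K_def by (rule conic_convex_cone_hull)
  have K0: "0 \<in> K" unfolding K_def by (rule convex_cone_hull_contains_0)
  show ?thesis
  proof (cases "(-c, 0) \<in> K")
    case True
    define P where "P = {p :: (real ^ 'm) \<times> real. \<exists>\<mu>. \<forall>x\<in>D. fst p \<bullet> x \<le> snd p + \<mu> * (d \<bullet> x)}"
    have "K \<subseteq> P" unfolding K_def
    proof (rule hull_minimal)
      show "S \<subseteq> P"
      proof
        fix p assume "p \<in> S"
        then consider (h) h where "h \<in> F" "p = (a h, b h)" | "p = (d,0)" | "p = (-d,0)" | "p = (0,1)"
          unfolding S_def by blast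
        then show "p \<in> P"
        proof cases
          case h then show ?thesis unfolding P_def using Dmem
            by (intro CollectI exI[of _ 0]) auto
        next
          case 2 then show ?thesis unfolding P_def
            by (intro CollectI exI[of _ 1]) auto
        next
          case 3 then show ?thesis unfolding P_def
            by (intro CollectI exI[of _ "-1"]) auto
        next
          case 4 then show ?thesis unfolding P_def
            by (intro CollectI exI[of _ 0]) auto
        qed
      qed
      show "convex_cone P"
        unfolding convex_cone_def
      proof (intro conjI)
        have "(0,0) \<in> P" unfolding P_def by (auto intro: exI[of _ 0])
        then show "P \<noteq> {}" by blast
        show "conic P" unfolding conic_def
        proof (intro allI impI)
          fix p and t :: real assume "p \<in> P" "0 \<le> t"
          then obtain \<mu> where m: "\<forall>x\<in>D. fst p \<bullet> x \<le> snd p + \<mu> * (d \<bullet> x)"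
            unfolding P_def by blast
          have "\<forall>x\<in>D. fst (t *\<^sub>R p) \<bullet> x \<le> snd (t *\<^sub>R p) + (t*\<mu>) * (d \<bullet> x)"
          proof
            fix x assume "x \<in> D"
            then have "t * (fst p \<bullet> x) \<le> t * (snd p + \<mu> * (d \<bullet> x))"
              using m \<open>0 \<le> t\<close> by (simp add: mult_left_mono)
            then show "fst (t *\<^sub>R p) \<bullet> x \<le> snd (t *\<^sub>R p) + (t*\<mu>) * (d \<bullet> x)"
              by (simp add: algebra_simps)
          qed
          then show "t *\<^sub>R p \<in> P" unfolding P_def by blast
        qed
        show "convex P" unfolding convex_def
        proof (intro ballI allI impI)
          fix p q and u v :: real assume "p \<in> P" "q \<in> P" "0 \<le> u" "0 \<le> v" "u + v = 1"
          then obtain \<mu> \<nu> where m: "\<forall>x\<in>D. fst p \<bullet> x \<le> snd p + \<mu> * (d \<bullet> x)"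
            and n: "\<forall>x\<in>D. fst q \<bullet> x \<le> snd q + \<nu> * (d \<bullet> x)"
            unfolding P_def by blast
          have "\<forall>x\<in>D. fst (u *\<^sub>R p + v *\<^sub>R q) \<bullet> x \<le> snd (u *\<^sub>R p + v *\<^sub>R q) + (u * \<mu> + v * \<nu>) * (d \<bullet> x)"
          proof
            fix x assume "x \<in> D"
            then have "u * (fst p \<bullet> x) \<le> u * (snd p + \<mu> * (d \<bullet> x))"
              "v * (fst q \<bullet> x) \<le> v * (snd q + \<nu> * (d \<bullet> x))"
              using m n \<open>0 \<le> u\<close> \<open>0 \<le> v\<close> by (simp_all add: mult_left_mono)
            then show "fst (u *\<^sub>R p + v *\<^sub>R q) \<bullet> x \<le> snd (u *\<^sub>R p + v *\<^sub>R q) + (u * \<mu> + v * \<nu>) * (d \<bullet> x)"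
              by (simp add: algebra_simps inner_add_left)
          qed
          then show "u *\<^sub>R p + v *\<^sub>R q \<in> P" unfolding P_def by blast
        qed
      qed
    qed
    with True have "(-c, 0) \<in> P" by blast
    then show ?thesis unfolding P_def by simp
  next
    case False
    obtain w b0 where wb: "inner w (-c, 0) < b0" "\<forall>k\<in>K. b0 < inner w k"
      using separating_hyperplane_closed_point[OF convK closedK False] by blast
    have b0: "b0 < 0" using wb(2) K0 by force
    have pos: "inner w k \<ge> 0" if "k \<in> K" for k
    proof (rule ccontr)
      assume "\<not> inner w k \<ge> 0"
      then have neg: "inner w k < 0" by simp
      define t where "t = b0 / inner w k"
      have "t \<ge> 0" using neg b0 by (simp add: t_def divide_nonpos_neg)
      then have "t *\<^sub>R k \<in> K" using conK that by (simp add: conicD)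
      then have "b0 < inner w (t *\<^sub>R k)" using wb(2) by blast
      also have "inner w (t *\<^sub>R k) = b0" using neg by (simp add: t_def)
      finally show False by simp
    qed
    obtain r s where w: "w = (r, s)" by (cases w)
    have SK: "S \<subseteq> K" unfolding K_def by (rule hull_subset)
    have hF: "r \<bullet> a h + s * b h \<ge> 0" if "h \<in> F" for h
      using pos[of "(a h, b h)"] SK that unfolding S_def w by auto
    have "r \<bullet> d \<ge> 0" using pos[of "(d,0)"] SK unfolding S_def w by auto
    moreover have "- (r \<bullet> d) \<ge> 0" using pos[of "(-d,0)"] SK unfolding S_def w by auto
    ultimately have rd: "d \<bullet> r = 0" by (simp add: inner_commute)
    have s0: "s \<ge> 0" using pos[of "(0,1)"] SK unfolding S_def w by auto
    have rc: "c \<bullet> r > 0" using wb(1) b0 unfolding w by (simp add: inner_commute)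
    show ?thesis
    proof (cases "s = 0")
      case True
      have "\<forall>x\<in>D. \<forall>t::real. t \<ge> 0 \<longrightarrow> x + t *\<^sub>R (-r) \<in> D"
      proof (intro ballI allI impI)
        fix x and t :: real assume "x \<in> D" "t \<ge> 0"
        show "x + t *\<^sub>R (-r) \<in> D" unfolding Dmem
        proof
          fix h assume "h \<in> F"
          have "a h \<bullet> r \<ge> 0" using hF[OF \<open>h \<in> F\<close>] True by (simp add: inner_commute)
          then have "t * (a h \<bullet> r) \<ge> 0" using \<open>t \<ge> 0\<close> by simp
          moreover have "a h \<bullet> x \<le> b h" using \<open>x \<in> D\<close> \<open>h \<in> F\<close> Dmem by blast
          ultimately show "a h \<bullet> (x + t *\<^sub>R (-r)) \<le> b h"
            by (simp add: inner_diff_right)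
        qed
      qed
      moreover have "c \<bullet> (-r) < 0" "d \<bullet> (-r) = 0" using rc rd by auto
      ultimately show ?thesis using n2 by blast
    next
      case False
      with s0 have sp: "s > 0" by simp
      define x where "x = (- 1 / s) *\<^sub>R r"
      have "x \<in> D" unfolding Dmem
      proof
        fix h assume "h \<in> F"
        have "a h \<bullet> r + s * b h \<ge> 0" using hF[OF \<open>h \<in> F\<close>] by (simp add: inner_commute)
        then have "- (a h \<bullet> r) \<le> b h * s" by (simp add: algebra_simps)
        then have "- (a h \<bullet> r) / s \<le> b h" using sp by (metis minus_divide_left pos_divide_le_eq)
        then show "a h \<bullet> x \<le> b h" unfolding x_def by simp
      qed
      moreover have "c \<bullet> x < 0" using rc sp unfolding x_def by (simp add: divide_pos_pos)
      moreover have "d \<bullet> x = 0" using rd unfolding x_def by simp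
      ultimately show ?thesis using n1 by blast
    qed
  qed
qed

theorem theorem3p7:
  fixes D :: "(real ^ 'm) set" and c d :: "real ^ 'm"
  assumes "polyhedron D"
    and "D \<inter> {x. d \<bullet> x > 0} \<noteq> {}"
  shows "(INF x \<in> D \<inter> {x. d \<bullet> x > 0}. ereal ((c \<bullet> x) / (d \<bullet> x))) = -\<infinity>
     \<longleftrightarrow> ((\<exists>x\<in>D. c \<bullet> x < 0 \<and> d \<bullet> x = 0) \<or>
          (\<exists>r. c \<bullet> r < 0 \<and> d \<bullet> r = 0 \<and> (\<forall>x\<in>D. \<forall>t::real. t \<ge> 0 \<longrightarrow> x + t *\<^sub>R r \<in> D)))"
    (is "?I = -\<infinity> \<longleftrightarrow> ?C1 \<or> ?C2")
proof
  assume I: "?I = -\<infinity>"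
  show "?C1 \<or> ?C2"
  proof (rule ccontr)
    assume "\<not> (?C1 \<or> ?C2)"
    then obtain \<mu> where m: "\<forall>x\<in>D. - (c \<bullet> x) \<le> \<mu> * (d \<bullet> x)"
      using farkas_part[OF assms(1)] by blast
    have "\<forall>x\<in>D \<inter> {x. d \<bullet> x > 0}. ereal (-\<mu>) \<le> ereal ((c \<bullet> x) / (d \<bullet> x))"
    proof
      fix x assume "x \<in> D \<inter> {x. d \<bullet> x > 0}"
      then have "- (c \<bullet> x) \<le> \<mu> * (d \<bullet> x)" "d \<bullet> x > 0" using m by auto
      then show "ereal (-\<mu>) \<le> ereal ((c \<bullet> x) / (d \<bullet> x))" by (simp add: le_divide_eq)
    qed
    then have "?I \<noteq> -\<infinity>" unfolding INF_eq_minf by (intro exI[of _ "ereal (-\<mu>)"]) auto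
    with I show False by simp
  qed
next
  assume C: "?C1 \<or> ?C2"
  obtain y where y: "y \<in> D" "d \<bullet> y > 0" using assms(2) by blast
  have cvx: "convex D" using assms(1) by (rule polyhedron_imp_convex)
  have small: "\<exists>x\<in>D \<inter> {x. d \<bullet> x > 0}. (c \<bullet> x) / (d \<bullet> x) < B" for B
    using C
  proof
    assume ?C1
    then obtain x0 where x0: "x0 \<in> D" "c \<bullet> x0 < 0" "d \<bullet> x0 = 0" by blast
    obtain s where s: "s \<ge> 0" "(c \<bullet> y + s * (c \<bullet> x0)) / (d \<bullet> y) < B"
      using ratio_small[OF y(2) x0(2)] by blast
    define z where "z = (1 / (1 + s)) *\<^sub>R y + (s / (1 + s)) *\<^sub>R x0"
    have "z \<in> D" unfolding z_def using cvx y(1) x0(1) s(1)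
      by (intro convexD) (auto simp: field_simps)
    moreover have dz: "d \<bullet> z = (d \<bullet> y) / (1 + s)" using x0(3) unfolding z_def
      by (simp add: inner_add_right)
    moreover have cz1: "c \<bullet> z = (1 / (1 + s)) * (c \<bullet> y) + (s / (1 + s)) * (c \<bullet> x0)"
      unfolding z_def by (simp add: inner_add_right)
    moreover have "(1 / (1 + s)) * (c \<bullet> y) + (s / (1 + s)) * (c \<bullet> x0) = (c \<bullet> y + s * (c \<bullet> x0)) / (1 + s)"
      using s(1) by (simp add: add_divide_distrib)
    ultimately have zD: "z \<in> D" and cz: "c \<bullet> z = (c \<bullet> y + s * (c \<bullet> x0)) / (1 + s)" and dz: "d \<bullet> z = (d \<bullet> y) / (1 + s)"
      by auto
    have sp: "1 + s > 0" using s(1) by simp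
    have dzp: "d \<bullet> z > 0" using dz sp y(2) by simp
    have "(c \<bullet> z) / (d \<bullet> z) = (c \<bullet> y + s * (c \<bullet> x0)) / (d \<bullet> y)"
      unfolding cz dz using sp by simp
    with s(2) zD dzp show ?thesis by (intro bexI[of _ z]) auto
  next
    assume ?C2
    then obtain r where r: "c \<bullet> r < 0" "d \<bullet> r = 0" "\<forall>x\<in>D. \<forall>t::real. t \<ge> 0 \<longrightarrow> x + t *\<^sub>R r \<in> D"
      by blast
    obtain s where s: "s \<ge> 0" "(c \<bullet> y + s * (c \<bullet> r)) / (d \<bullet> y) < B"
      using ratio_small[OF y(2) r(1)] by blast
    have "y + s *\<^sub>R r \<in> D" using r(3) y(1) s(1) by blast
    then show ?thesis using s y(2) r(2)
      by (intro bexI[of _ "y + s *\<^sub>R r"]) (auto simp: inner_add_right)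
  qed
  show "?I = -\<infinity>"
  proof (rule ccontr)
    assume "?I \<noteq> -\<infinity>"
    then obtain b where b: "b > -\<infinity>" "\<forall>x\<in>D \<inter> {x. d \<bullet> x > 0}. b \<le> ereal ((c \<bullet> x) / (d \<bullet> x))"
      unfolding INF_eq_minf by blast
    show False
    proof (cases b)
      case (real B)
      obtain x where x: "x \<in> D \<inter> {x. d \<bullet> x > 0}" "(c \<bullet> x) / (d \<bullet> x) < B" using small by blast
      have "ereal B \<le> ereal ((c \<bullet> x) / (d \<bullet> x))" using b(2) x(1) real by blast
      with x(2) show False by simp
    next
      case PInf
      with b(2) y show False by auto
    next
      case MInf with b(1) show False by simp
    qed
  qed
qed

end
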